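(* Let $(G,\mathbf p)$ be a framework (with $\mathbf p$ pinned with $\ell$-dimensional affine span) with $\dim(K)=1$, let $E$ be a stiff-bar energy at $\mathbf p$, and let $f(\delta\mathbf p)=E(\mathbf p+\delta\mathbf p)-E(\mathbf p)$. Let $k\ge2$ and suppose $(G,\mathbf p)$ has a $(1,k-1)$-flex $\mathbf p+\mathbf p't+\mathbf p''t^2+\cdots+\mathbf p^{(k-1)}t^{k-1}$ with $|\mathbf p'|=1$ and $\mathbf p^{(j)}\in\overline K$ for $2\le j\le k-1$. Consider the family $\delta\mathbf p(t;y_0,\mathbf p_0^{(k)})=y_0\mathbf p't+y_0^2\mathbf p''t^2+\cdots+y_0^{k-1}\mathbf p^{(k-1)}t^{k-1}+\mathbf p_0^{(k)}t^k$, with $(y_0,\mathbf p_0^{(k)})$ in the unit sphere of $\mathbb R\times\overline K$, and let $a_{2k}(y_0,\mathbf p_0^{(k)})$ be the coefficient of $t^{2k}$ in the Taylor expansion of $f(\delta\mathbf p(t;y_0,\mathbf p_0^{(k)}))$ at $t=0$. Suppose the $2k$-th derivative test is inconclusive, i.e. $a_{2k}$ is neither positive everywhere on the sphere, nor negative everywhere, nor takes both positive and negative values. If $(y_0,\mathbf p_0^{(k)})$ is a parameter on the sphere such that $f(\delta\mathbf p(t;y_0,\mathbf p_0^{(k)}))$ vanishes through order $2k$ (all Taylor coefficients of orders $0,\dots,2k$ are zero), then $y_0\ne0$; in particular the trajectory $\mathbf p+\delta\mathbf p(t;y_0,\mathbf p_0^{(k)})$ is $1$-active.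
   Context: Fix a dimension $d$. A configuration is $\mathbf p=(\mathbf p_1,\dots,\mathbf p_n)$, $\mathbf p_i\in\mathbb R^d$; a framework $(G,\mathbf p)$ consists of a graph $G$ on $\{1,\dots,n\}$ and a configuration. A configuration $\mathbf q$ is in $\ell$-pinned position if $\mathbf q_1=0$ and, for $2\le i\le\ell+1$, $\mathbf q_i\in\mathrm{span}(e_1,\dots,e_{i-1})$; these form the $\ell$-pinned configuration space, on which $f$ and $E$ are defined. $\mathbf p$ is pinned if it has $\ell$-dimensional affine span, $\mathbf p_1,\dots,\mathbf p_{\ell+1}$ are affinely independent, and $\mathbf p$ is in $\ell$-pinned position. A $C^k$ function $\varphi(t)$ is $k$-vanishing if $\varphi^{(i)}(0)=0$ for $1\le i\le k$, $k$-active if $(k-1)$-vanishing but not $k$-vanishing. With $\mathbf m(\mathbf q)=(|\mathbf q_i-\mathbf q_j|^2)_{ij\in E(G)}$, a $(j,k)$-flex is an analytic non-constant $\ell$-pinned trajectory $\mathbf p(t)$, $\mathbf p(0)=\mathbf p$, that is $j$-active with $\mathbf m(\mathbf p(t))$ $k$-vanishing. $K$ is the linear space of $\ell$-pinned $\mathbf p'$ with $(\mathbf p_v-\mathbf p_w)\cdot(\mathbf p'_v-\mathbf p'_w)=0$ for all edges $vw$, $\overline K$ a fixed complementary subspace. A stiff-bar energy at $\mathbf p$ is $E(\mathbf q)=\sum_{ij\in E(G)}E_{ij}(|\mathbf q_i-\mathbf q_j|)$, each $E_{ij}$ analytic at $d_{ij}=|\mathbf p_i-\mathbf p_j|\ne0$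 with a strict local minimum there and $E_{ij}''(d_{ij})>0$. *)

theory Defs
  imports "HOL-Analysis.Analysis"
begin

text \<open>Vertices are 0..n-1 (paper vertex i is our vertex i-1), coordinates are
0..d-1 (paper axis e_c is our coordinate c-1). A configuration is a function
q :: nat => nat => real, q i c being coordinate c of point i, required to vanish outside
i < n, c < d.\<close>

type_synonym config = "nat \<Rightarrow> nat \<Rightarrow> real"

definition czero :: config where "czero = (\<lambda>i c. 0)"
definition cadd :: "config \<Rightarrow> config \<Rightarrow> config" where "cadd x y = (\<lambda>i c. x i c + y i c)"
definition cscale :: "real \<Rightarrow> config \<Rightarrow> config" where "cscale a x = (\<lambda>i c. a * x i c)"
definition csum :: "(nat \<Rightarrow> config) \<Rightarrow> nat set \<Rightarrow> config" where
  "csum f A = (\<lambda>i c. \<Sum>j\<in>A. f j i c)"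
definition cinner :: "nat \<Rightarrow> nat \<Rightarrow> config \<Rightarrow> config \<Rightarrow> real" where
  "cinner n d x y = (\<Sum>i<n. \<Sum>c<d. x i c * y i c)"
definition cnorm :: "nat \<Rightarrow> nat \<Rightarrow> config \<Rightarrow> real" where
  "cnorm n d x = sqrt (cinner n d x x)"

definition in_support :: "nat \<Rightarrow> nat \<Rightarrow> config \<Rightarrow> bool" where
  "in_support n d q \<longleftrightarrow> (\<forall>i c. (n \<le> i \<or> d \<le> c) \<longrightarrow> q i c = 0)"

text \<open>l-pinned position: q_1 = 0 and q_i in span(e_1..e_{i-1}) for 2 <= i <= l+1 (paper indexing).\<close>
definition pinned_pos :: "nat \<Rightarrow> nat \<Rightarrow> nat \<Rightarrow> config \<Rightarrow> bool" where
  "pinned_pos n d l q \<longleftrightarrow> in_support n d q \<and> (\<forall>c. q 0 c = 0) \<and>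
     (\<forall>i. 1 \<le> i \<and> i \<le> l \<longrightarrow> (\<forall>c. i \<le> c \<longrightarrow> q i c = 0))"

definition pinned_space :: "nat \<Rightarrow> nat \<Rightarrow> nat \<Rightarrow> config set" where
  "pinned_space n d l = {q. pinned_pos n d l q}"

definition is_pinned :: "nat \<Rightarrow> nat \<Rightarrow> nat \<Rightarrow> config \<Rightarrow> bool" where
  "is_pinned n d l p \<longleftrightarrow> l < n \<and> pinned_pos n d l p \<and>
     (\<forall>a::nat\<Rightarrow>real. (\<forall>c. (\<Sum>i\<in>{1..l}. a i * (p i c - p 0 c)) = 0) \<longrightarrow> (\<forall>i\<in>{1..l}. a i = 0)) \<and>
     (\<forall>j<n. \<exists>a::nat\<Rightarrow>real. \<forall>c. p j c - p 0 c = (\<Sum>i\<in>{1..l}. a i * (p i c - p 0 c)))"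

definition graph_ok :: "nat \<Rightarrow> (nat \<times> nat) set \<Rightarrow> bool" where
  "graph_ok n G \<longleftrightarrow> (\<forall>(i,j)\<in>G. i < j \<and> j < n)"

definition elen :: "nat \<Rightarrow> config \<Rightarrow> nat \<Rightarrow> nat \<Rightarrow> real" where
  "elen d q i j = sqrt (\<Sum>c<d. (q i c - q j c)^2)"

definition Kspace :: "nat \<Rightarrow> nat \<Rightarrow> nat \<Rightarrow> (nat \<times> nat) set \<Rightarrow> config \<Rightarrow> config set" where
  "Kspace n d l G p = {q \<in> pinned_space n d l.
      \<forall>(v,w)\<in>G. (\<Sum>c<d. (p v c - p w c) * (q v c - q w c)) = 0}"

definition dim_one :: "config set \<Rightarrow> bool" where
  "dim_one K \<longleftrightarrow> (\<exists>v\<in>K. v \<noteq> czero \<and> (\<forall>w\<in>K. \<exists>a. w = cscale a v))"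

definition is_complement :: "nat \<Rightarrow> nat \<Rightarrow> nat \<Rightarrow> config set \<Rightarrow> config set \<Rightarrow> bool" where
  "is_complement n d l K Kb \<longleftrightarrow> Kb \<subseteq> pinned_space n d l \<and> czero \<in> Kb \<and>
     (\<forall>x\<in>Kb. \<forall>y\<in>Kb. cadd x y \<in> Kb) \<and> (\<forall>a. \<forall>x\<in>Kb. cscale a x \<in> Kb) \<and>
     K \<inter> Kb = {czero} \<and>
     (\<forall>q\<in>pinned_space n d l. \<exists>u\<in>K. \<exists>w\<in>Kb. q = cadd u w)"

definition real_analytic_at :: "(real \<Rightarrow> real) \<Rightarrow> real \<Rightarrow> bool" where
  "real_analytic_at g x \<longleftrightarrow> (\<exists>r>0. \<exists>a::nat\<Rightarrow>real.
      \<forall>y. \<bar>y - x\<bar> < r \<longrightarrow> (\<lambda>m. a m * (y - x)^m) sums g y)"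

definition stiff_bar :: "nat \<Rightarrow> (nat \<times> nat) set \<Rightarrow> config \<Rightarrow> (nat \<Rightarrow> nat \<Rightarrow> real \<Rightarrow> real) \<Rightarrow> bool" where
  "stiff_bar d G p Es \<longleftrightarrow> (\<forall>(i,j)\<in>G.
      elen d p i j \<noteq> 0 \<and> real_analytic_at (Es i j) (elen d p i j) \<and>
      (\<exists>r>0. \<forall>x. 0 < \<bar>x - elen d p i j\<bar> \<and> \<bar>x - elen d p i j\<bar> < r \<longrightarrow>
                  Es i j (elen d p i j) < Es i j x) \<and>
      (deriv ^^ 2) (Es i j) (elen d p i j) > 0)"

definition energy :: "nat \<Rightarrow> (nat \<times> nat) set \<Rightarrow> (nat \<Rightarrow> nat \<Rightarrow> real \<Rightarrow> real) \<Rightarrow> config \<Rightarrow> real" where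
  "energy d G Es q = (\<Sum>(i,j)\<in>G. Es i j (elen d q i j))"

definition fdelta :: "nat \<Rightarrow> (nat \<times> nat) set \<Rightarrow> (nat \<Rightarrow> nat \<Rightarrow> real \<Rightarrow> real) \<Rightarrow> config \<Rightarrow> config \<Rightarrow> real" where
  "fdelta d G Es p dp = energy d G Es (cadd p dp) - energy d G Es p"

definition k_vanishing :: "nat \<Rightarrow> (real \<Rightarrow> real) \<Rightarrow> bool" where
  "k_vanishing k g \<longleftrightarrow> (\<forall>i\<in>{1..k}. (deriv ^^ i) g 0 = 0)"

definition k_active :: "nat \<Rightarrow> (real \<Rightarrow> real) \<Rightarrow> bool" where
  "k_active k g \<longleftrightarrow> k_vanishing (k - 1) g \<and> \<not> k_vanishing k g"

definition traj_vanishing :: "nat \<Rightarrow> (real \<Rightarrow> config) \<Rightarrow> bool" where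
  "traj_vanishing k tr \<longleftrightarrow> (\<forall>i c. k_vanishing k (\<lambda>t. tr t i c))"

definition traj_active :: "nat \<Rightarrow> (real \<Rightarrow> config) \<Rightarrow> bool" where
  "traj_active k tr \<longleftrightarrow> traj_vanishing (k - 1) tr \<and> \<not> traj_vanishing k tr"

definition is_flex :: "nat \<Rightarrow> nat \<Rightarrow> nat \<Rightarrow> (nat \<times> nat) set \<Rightarrow> config \<Rightarrow> nat \<Rightarrow> nat \<Rightarrow> (real \<Rightarrow> config) \<Rightarrow> bool" where
  "is_flex n d l G p j k tr \<longleftrightarrow>
     (\<forall>i c. real_analytic_at (\<lambda>t. tr t i c) 0) \<and>
     (\<forall>t. pinned_pos n d l (tr t)) \<and>
     (\<forall>e>0. \<exists>t. \<bar>t\<bar> < e \<and> tr t \<noteq> tr 0) \<and>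
     tr 0 = p \<and> traj_active j tr \<and>
     (\<forall>(v,w)\<in>G. k_vanishing k (\<lambda>t. (elen d (tr t) v w)^2))"

definition taylor_coeff :: "(real \<Rightarrow> real) \<Rightarrow> nat \<Rightarrow> real" where
  "taylor_coeff g m = (deriv ^^ m) g 0 / fact m"

definition dp_family :: "nat \<Rightarrow> (nat \<Rightarrow> config) \<Rightarrow> real \<Rightarrow> config \<Rightarrow> real \<Rightarrow> config" where
  "dp_family k P y0 q t = cadd (csum (\<lambda>j. cscale (y0^j * t^j) (P j)) {1..k-1}) (cscale (t^k) q)"

end

theory Submission
  imports Defs
begin


definition Cm :: "nat \<Rightarrow> real set \<Rightarrow> (real \<Rightarrow> real) \<Rightarrow> bool" where
  "Cm m U f \<longleftrightarrow> (\<forall>j<m. \<forall>y\<in>U. ((deriv^^j) f has_real_derivative (deriv^^Suc j) f y) (at y))"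

lemma funpow_deriv_Suc: "(deriv^^Suc j) f = (deriv^^j) (deriv f)"
  by (simp add: funpow_Suc_right del: funpow.simps)

lemma Cm_0[simp]: "Cm 0 U f" by (simp add: Cm_def)

lemma Cm_Suc: "Cm (Suc m) U f \<longleftrightarrow> (\<forall>y\<in>U. (f has_real_derivative deriv f y) (at y)) \<and> Cm m U (deriv f)"
  unfolding Cm_def
proof safe
  fix j y assume "\<forall>j<Suc m. \<forall>y\<in>U. ((deriv ^^ j) f has_real_derivative (deriv ^^ Suc j) f y) (at y)" "j < m" "y \<in> U"
  then show "((deriv ^^ j) (deriv f) has_real_derivative (deriv ^^ Suc j) (deriv f) y) (at y)"
    by (metis Suc_mono funpow_deriv_Suc)
next
  fix j y assume a: "\<forall>y\<in>U. (f has_real_derivative deriv f y) (at y)"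
     "\<forall>j<m. \<forall>y\<in>U. ((deriv ^^ j) (deriv f) has_real_derivative (deriv ^^ Suc j) (deriv f) y) (at y)"
     "j < Suc m" "y \<in> U"
  show "((deriv ^^ j) f has_real_derivative (deriv ^^ Suc j) f y) (at y)"
  proof (cases j)
    case 0 then show ?thesis using a by simp
  next
    case (Suc j') then show ?thesis using a(2)[rule_format, of j' y] a(3,4)
      by (metis Suc_less_SucD funpow_deriv_Suc)
  qed
qed auto

lemma Cm_mono: "m' \<le> m \<Longrightarrow> Cm m U f \<Longrightarrow> Cm m' U f"
  by (auto simp: Cm_def)

lemma Cm_subset: "V \<subseteq> U \<Longrightarrow> Cm m U f \<Longrightarrow> Cm m V f"
  by (auto simp: Cm_def)

lemma deriv_local: "open U \<Longrightarrow> y \<in> U \<Longrightarrow> (\<And>x. x \<in> U \<Longrightarrow> f x = h x) \<Longrightarrow> deriv f y = deriv h y"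
  by (rule deriv_cong_ev) (auto simp: eventually_nhds)

lemma funpow_deriv_local: "open U \<Longrightarrow> (\<And>x. x \<in> U \<Longrightarrow> f x = h x) \<Longrightarrow> y \<in> U \<Longrightarrow> (deriv^^j) f y = (deriv^^j) h y"
proof (induction j arbitrary: y)
  case 0 then show ?case by simp
next
  case (Suc j)
  have "(deriv^^Suc j) f y = deriv ((deriv^^j) f) y" by simp
  also have "\<dots> = deriv ((deriv^^j) h) y"
    by (rule deriv_local[OF Suc.prems(1,3)]) (rule Suc.IH[OF Suc.prems(1,2)])
  also have "\<dots> = (deriv^^Suc j) h y" by simp
  finally show ?case .
qed

lemma Cm_local: assumes "open U" "\<And>x. x \<in> U \<Longrightarrow> f x = h x" "Cm m U f" shows "Cm m U h"
  unfolding Cm_def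
proof safe
  fix j y assume j: "j < m" "y \<in> U"
  have "((deriv ^^ j) f has_real_derivative (deriv ^^ Suc j) f y) (at y)" using assms(3) j by (auto simp: Cm_def)
  then have "((deriv ^^ j) h has_real_derivative (deriv ^^ Suc j) f y) (at y)"
    by (rule has_field_derivative_transform_within_open[OF _ assms(1) j(2)]) (rule funpow_deriv_local[OF assms(1,2)])
  moreover have "(deriv ^^ Suc j) f y = (deriv ^^ Suc j) h y" by (rule funpow_deriv_local[OF assms(1,2) j(2)])
  ultimately show "((deriv ^^ j) h has_real_derivative (deriv ^^ Suc j) h y) (at y)" by simp
qed

lemma local_deriv_eq: assumes "\<forall>y\<in>U. (F has_real_derivative D y) (at y)" "x \<in> U" shows "D x = deriv F x"
proof -
  have "(F has_real_derivative D x) (at x)" using assms by blast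
  then show ?thesis by (rule DERIV_imp_deriv[THEN sym])
qed

lemma has_deriv_all: assumes "\<forall>y\<in>U. (F has_real_derivative D y) (at y)" shows "\<forall>y\<in>U. (F has_real_derivative deriv F y) (at y)"
proof
  fix y assume "y \<in> U"
  then have d: "(F has_real_derivative D y) (at y)" using assms by blast
  then have "deriv F y = D y" by (rule DERIV_imp_deriv)
  with d show "(F has_real_derivative deriv F y) (at y)" by simp
qed

lemma Cm_const: "Cm m U (\<lambda>x. c)"
proof (induction m arbitrary: c)
  case (Suc m)
  have "deriv (\<lambda>x::real. c) = (\<lambda>x. 0)" by (intro ext DERIV_imp_deriv) auto
  then show ?case using Suc by (simp add: Cm_Suc)
qed simp

lemma Cm_id: "Cm m U (\<lambda>x. x)"
proof (cases m)
  case (Suc m')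
  have "deriv (\<lambda>x::real. x) = (\<lambda>x. 1)" by (intro ext DERIV_imp_deriv) auto
  then show ?thesis using Suc by (simp add: Cm_Suc Cm_const)
qed simp

lemma Cm_add: assumes "open U" shows "Cm m U f \<Longrightarrow> Cm m U g \<Longrightarrow> Cm m U (\<lambda>x. f x + g x)"
proof (induction m arbitrary: f g)
  case (Suc m)
  have d: "\<forall>y\<in>U. (f has_real_derivative deriv f y) (at y)" "\<forall>y\<in>U. (g has_real_derivative deriv g y) (at y)"
    and c: "Cm m U (deriv f)" "Cm m U (deriv g)" using Suc.prems by (auto simp: Cm_Suc)
  have dd: "\<forall>y\<in>U. ((\<lambda>x. f x + g x) has_real_derivative deriv f y + deriv g y) (at y)"
    using d by (auto intro: derivative_intros)
  have "Cm m U (\<lambda>x. deriv f x + deriv g x)" using Suc.IH c by blast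
  then have "Cm m U (deriv (\<lambda>x. f x + g x))"
    by (rule Cm_local[OF assms, rotated]) (rule local_deriv_eq[OF dd])
  then show ?case unfolding Cm_Suc using has_deriv_all[OF dd] by blast
qed simp

lemma Cm_mult: assumes "open U" shows "Cm m U f \<Longrightarrow> Cm m U g \<Longrightarrow> Cm m U (\<lambda>x. f x * g x)"
proof (induction m arbitrary: f g)
  case (Suc m)
  have d: "\<forall>y\<in>U. (f has_real_derivative deriv f y) (at y)" "\<forall>y\<in>U. (g has_real_derivative deriv g y) (at y)"
    and c: "Cm m U (deriv f)" "Cm m U (deriv g)" using Suc.prems by (auto simp: Cm_Suc)
  have c2: "Cm m U f" "Cm m U g" using Suc.prems Cm_mono le_SucI by blast+
  have dd: "\<forall>y\<in>U. ((\<lambda>x. f x * g x) has_real_derivative deriv f y * g y + f y * deriv g y) (at y)"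
    using d by (auto intro!: derivative_eq_intros)
  have "Cm m U (\<lambda>x. deriv f x * g x + f x * deriv g x)" 
    using Suc.IH c c2 Cm_add[OF assms] by blast
  then have "Cm m U (deriv (\<lambda>x. f x * g x))"
    by (rule Cm_local[OF assms, rotated]) (rule local_deriv_eq[OF dd])
  then show ?case unfolding Cm_Suc using has_deriv_all[OF dd] by blast
qed simp

lemma Cm_compose: assumes "open U" "open V" "g ` U \<subseteq> V"
  shows "Cm m V f \<Longrightarrow> Cm m U g \<Longrightarrow> Cm m U (\<lambda>x. f (g x))"
proof (induction m arbitrary: f)
  case (Suc m)
  have d: "\<forall>y\<in>V. (f has_real_derivative deriv f y) (at y)" "\<forall>y\<in>U. (g has_real_derivative deriv g y) (at y)"
    and c: "Cm m V (deriv f)" "Cm m U (deriv g)" using Suc.prems by (auto simp: Cm_Suc)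
  have c2: "Cm m U g" using Suc.prems Cm_mono le_SucI by blast+
  have dd: "\<forall>y\<in>U. ((\<lambda>x. f (g x)) has_real_derivative deriv f (g y) * deriv g y) (at y)"
  proof
    fix y assume y: "y \<in> U"
    then have "g y \<in> V" using assms(3) by auto
    then show "((\<lambda>x. f (g x)) has_real_derivative deriv f (g y) * deriv g y) (at y)"
      using d y by (intro DERIV_chain2) auto
  qed
  have "Cm m U (\<lambda>x. deriv f (g x))" using Suc.IH c c2 by blast
  then have "Cm m U (\<lambda>x. deriv f (g x) * deriv g x)" using Cm_mult[OF assms(1)] c by blast
  then have "Cm m U (deriv (\<lambda>x. f (g x)))"
    by (rule Cm_local[OF assms(1), rotated]) (rule local_deriv_eq[OF dd])
  then show ?case unfolding Cm_Suc using has_deriv_all[OF dd] by blast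
qed simp

lemma Cm_power: assumes "open U" shows "Cm m U f \<Longrightarrow> Cm m U (\<lambda>x. f x ^ k)"
  by (induction k) (auto simp: Cm_const intro: Cm_mult[OF assms])

lemma Cm_sum: assumes "open U" "finite A" shows "(\<And>a. a \<in> A \<Longrightarrow> Cm m U (f a)) \<Longrightarrow> Cm m U (\<lambda>x. \<Sum>a\<in>A. f a x)"
  using assms(2) by (induction A rule: finite_induct) (auto simp: Cm_const intro: Cm_add[OF assms(1)])

lemma Cm_diff: assumes "open U" shows "Cm m U f \<Longrightarrow> Cm m U g \<Longrightarrow> Cm m U (\<lambda>x. f x - g x)"
proof -
  assume a: "Cm m U f" "Cm m U g"
  have "Cm m U (\<lambda>x. f x + (-1) * g x)" using a by (intro Cm_add Cm_mult Cm_const assms)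
  then show ?thesis by simp
qed

lemma Cm_inverse: "Cm m {0<..} (\<lambda>x. inverse x)"
proof (induction m)
  case (Suc m)
  have dd: "\<forall>y\<in>{0<..}. ((\<lambda>x. inverse x) has_real_derivative (-1) * (inverse y * inverse y)) (at y)"
    by (auto intro!: derivative_eq_intros simp: power2_eq_square)
  have "Cm m {0<..} (\<lambda>x. (-1) * (inverse x * inverse x))" using Suc by (intro Cm_mult Cm_const) auto
  then have "Cm m {0<..} (deriv (\<lambda>x. inverse x))"
    by (rule Cm_local[OF open_greaterThan, rotated]) (rule local_deriv_eq[OF dd])
  then show ?case unfolding Cm_Suc using has_deriv_all[OF dd] by blast
qed simp

lemma Cm_sqrt: "Cm m {0<..} sqrt"
proof (induction m)
  case (Suc m)
  have dd: "\<forall>y\<in>{0<..}. (sqrt has_real_derivative inverse (sqrt y) * (1/2)) (at y)"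
    using DERIV_real_sqrt by auto
  have "Cm m {0<..} (\<lambda>x. inverse (sqrt x))"
    by (rule Cm_compose[OF open_greaterThan open_greaterThan _ Cm_inverse Suc]) auto
  then have "Cm m {0<..} (\<lambda>x. inverse (sqrt x) * (1/2))" by (intro Cm_mult Cm_const) auto
  then have "Cm m {0<..} (deriv sqrt)"
    by (rule Cm_local[OF open_greaterThan, rotated]) (rule local_deriv_eq[OF dd])
  then show ?case unfolding Cm_Suc using has_deriv_all[OF dd] by blast
qed simp

lemma Cm_powser: "(\<And>z. \<bar>z\<bar> < r \<Longrightarrow> summable (\<lambda>n. c n * z^n)) \<Longrightarrow> Cm m (ball 0 r) (\<lambda>z. \<Sum>n. c n * z^n)"
proof (induction m arbitrary: c)
  case (Suc m)
  have dd: "\<forall>y\<in>ball 0 r. ((\<lambda>z. \<Sum>n. c n * z^n) has_real_derivative (\<Sum>n. diffs c n * y^n)) (at y)"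
  proof
    fix y :: real assume "y \<in> ball 0 r"
    then have y: "\<bar>y\<bar> < r" by simp
    show "((\<lambda>z. \<Sum>n. c n * z^n) has_real_derivative (\<Sum>n. diffs c n * y^n)) (at y)"
      by (rule termdiffs_strong[of _ "(\<bar>y\<bar> + r)/2"]) (use y Suc.prems in auto)
  qed
  have "Cm m (ball 0 r) (\<lambda>z. \<Sum>n. diffs c n * z^n)"
    by (rule Suc.IH) (rule termdiff_converges[of _ r], use Suc.prems in auto)
  then have "Cm m (ball 0 r) (deriv (\<lambda>z. \<Sum>n. c n * z^n))"
    by (rule Cm_local[OF open_ball, rotated]) (rule local_deriv_eq[OF dd])
  then show ?case unfolding Cm_Suc using has_deriv_all[OF dd] by blast
qed simp



lemma taylor_contra:
  fixes g :: "real \<Rightarrow> real"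
  assumes U: "open U" "0 \<in> U" and cm: "Cm (Suc N) U g" and N: "0 < N"
    and van: "\<forall>m\<le>N. (deriv^^m) g 0 = 0" and c: "c > 0"
    and ev: "eventually (\<lambda>h. c * h^N \<le> g h) (at_right 0)"
  shows False
proof -
  have dN: "((deriv^^N) g has_real_derivative (deriv^^Suc N) g 0) (at 0)"
    using cm U by (auto simp: Cm_def)
  then have "isCont ((deriv^^N) g) 0" by (rule DERIV_isCont)
  then have "((deriv^^N) g \<longlongrightarrow> 0) (at 0)" using van by (simp add: isCont_def)
  then have "eventually (\<lambda>x. dist ((deriv^^N) g x) 0 < c * fact N / 2) (at 0)"
    using c by (intro tendstoD) auto
  then have "eventually (\<lambda>x. \<bar>(deriv^^N) g x\<bar> < c * fact N / 2) (at_right 0)"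
    by (auto simp: dist_real_def intro: filter_leD[OF at_le, rotated])
  then obtain b1 where b1: "b1 > 0" "\<And>y. y > 0 \<Longrightarrow> y < b1 \<Longrightarrow> \<bar>(deriv^^N) g y\<bar> < c * fact N / 2"
    by (auto simp: eventually_at_right_field)
  obtain b2 where b2: "b2 > 0" "\<And>y. y > 0 \<Longrightarrow> y < b2 \<Longrightarrow> c * y^N \<le> g y"
    using ev by (auto simp: eventually_at_right_field)
  obtain e where e: "e > 0" "ball 0 e \<subseteq> U" using U open_contains_ball by blast
  define h where "h = min (min b1 b2) e / 2"
  have h: "0 < h" "h < b1" "h < b2" "h < e" using b1 b2 e by (auto simp: h_def)
  have "\<exists>t. (if h < 0 then h < t \<and> t < 0 else 0 < t \<and> t < h) \<and>
    g h = (\<Sum>m<N. ((\<lambda>m. (deriv^^m) g) m 0 / fact m) * (h - 0)^m) + ((\<lambda>m. (deriv^^m) g) N t / fact N) * (h - 0)^N"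
  proof (rule Taylor[of N "\<lambda>m. (deriv^^m) g" g 0 h 0 h])
    show "\<forall>m t. m < N \<and> 0 \<le> t \<and> t \<le> h \<longrightarrow> ((\<lambda>m. (deriv^^m) g) m has_real_derivative (\<lambda>m. (deriv^^m) g) (Suc m) t) (at t)"
    proof (intro allI impI)
      fix m t assume mt: "m < N \<and> 0 \<le> t \<and> t \<le> h"
      then have "t \<in> U" using e h by (auto simp: dist_real_def)
      then show "((\<lambda>m. (deriv^^m) g) m has_real_derivative (\<lambda>m. (deriv^^m) g) (Suc m) t) (at t)"
        using cm mt by (auto simp: Cm_def)
    qed
  qed (use N h in auto)
  then obtain t where t: "0 < t" "t < h" and eq: "g h = (\<Sum>m<N. ((deriv^^m) g 0 / fact m) * h^m) + ((deriv^^N) g t / fact N) * h^N"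
    using h by auto
  have "(\<Sum>m<N. ((deriv^^m) g 0 / fact m) * h^m) = 0" using van by (auto intro!: sum.neutral)
  with eq have geq: "g h = ((deriv^^N) g t / fact N) * h^N" by simp
  have "c * h^N \<le> ((deriv^^N) g t / fact N) * h^N" using b2(2)[of h] h geq by auto
  moreover have "h^N > 0" using h by simp
  ultimately have "c \<le> (deriv^^N) g t / fact N" by (rule mult_right_le_imp_le)
  then have "c * fact N \<le> (deriv^^N) g t" by (simp add: field_simps)
  moreover have "\<bar>(deriv^^N) g t\<bar> < c * fact N / 2" using b1(2)[of t] t h by auto
  moreover have "c * fact N > 0" using c by simp
  ultimately show False by linarith
qed

lemma quad_lower:
  fixes f :: "real \<Rightarrow> real"
  assumes U: "open U" "x0 \<in> U" and cm: "Cm 3 U f" and d1: "deriv f x0 = 0" and d2: "(deriv^^2) f x0 > 0"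
  shows "eventually (\<lambda>x. (deriv^^2) f x0 / 4 * (x - x0)^2 \<le> f x - f x0) (nhds x0)"
proof -
  have a: "\<forall>j<3. \<forall>y\<in>U. ((deriv^^j) f has_real_derivative (deriv^^Suc j) f y) (at y)"
    using cm by (simp only: Cm_def)
  have "((deriv^^2) f has_real_derivative (deriv^^Suc 2) f x0) (at x0)"
    by (rule a[rule_format]) (use U in auto)
  then have "isCont ((deriv^^2) f) x0" by (rule DERIV_isCont)
  then have "((deriv^^2) f \<longlongrightarrow> (deriv^^2) f x0) (nhds x0)" by (simp add: isCont_def tendsto_at_iff_tendsto_nhds)
  then have "eventually (\<lambda>x. (deriv^^2) f x > (deriv^^2) f x0 / 2) (nhds x0)"
    using d2 by (intro order_tendstoD) auto
  then obtain d where d: "d > 0" "\<And>x. dist x x0 < d \<Longrightarrow> (deriv^^2) f x > (deriv^^2) f x0 / 2"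
    by (auto simp: eventually_nhds_metric)
  obtain e where e: "e > 0" "ball x0 e \<subseteq> U" using U open_contains_ball by blast
  show ?thesis unfolding eventually_nhds_metric
  proof (intro exI[of _ "min d e"] conjI allI impI)
    show "min d e > 0" using d e by simp
    fix x assume x: "dist x x0 < min d e"
    show "(deriv^^2) f x0 / 4 * (x - x0)^2 \<le> f x - f x0"
    proof (cases "x = x0")
      case False
      have "\<exists>t. (if x < x0 then x < t \<and> t < x0 else x0 < t \<and> t < x) \<and>
        f x = (\<Sum>m<2. ((\<lambda>m. (deriv^^m) f) m x0 / fact m) * (x - x0)^m) + ((\<lambda>m. (deriv^^m) f) 2 t / fact 2) * (x - x0)^2"
      proof (rule Taylor[of 2 "\<lambda>m. (deriv^^m) f" f "min x x0" "max x x0" x0 x])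
        show "\<forall>(m::nat) t. m < 2 \<and> min x x0 \<le> t \<and> t \<le> max x x0 \<longrightarrow> ((\<lambda>m. (deriv^^m) f) m has_real_derivative (\<lambda>m. (deriv^^m) f) (Suc m) t) (at t)"
        proof (intro allI impI)
          fix m :: nat and t assume mt: "m < 2 \<and> min x x0 \<le> t \<and> t \<le> max x x0"
          then have "dist t x0 < e" using x by (auto simp: dist_real_def)
          then have "t \<in> U" using e by (auto simp: dist_commute)
          then show "((\<lambda>m. (deriv^^m) f) m has_real_derivative (\<lambda>m. (deriv^^m) f) (Suc m) t) (at t)"
            using cm mt by (auto simp: Cm_def)
        qed
      qed (use False in auto)
      then obtain t where tb: "(if x < x0 then x < t \<and> t < x0 else x0 < t \<and> t < x)"
        and eq0: "f x = (\<Sum>m<2. ((deriv^^m) f x0 / fact m) * (x - x0)^m) + ((deriv^^2) f t / fact 2) * (x - x0)^2"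
        by blast
      have t: "dist t x0 < d" using tb x by (auto simp: dist_real_def split: if_splits)
      have sum2: "(\<Sum>m<2. ((deriv^^m) f x0 / fact m) * (x - x0)^m) = f x0"
        using d1 by (simp add: numeral_2_eq_2)
      have f2: "fact 2 = (2::real)" by (simp add: numeral_2_eq_2)
      have eq2: "f x - f x0 = ((deriv^^2) f t / 2) * (x - x0)^2" using eq0 sum2 f2 by simp
      have "(deriv^^2) f x0 / 4 \<le> (deriv^^2) f t / 2" using d(2)[OF t] by simp
      then have "(deriv^^2) f x0 / 4 * (x - x0)^2 \<le> ((deriv^^2) f t / 2) * (x - x0)^2"
        by (rule mult_right_mono) simp
      then show ?thesis using eq2 by simp
    qed simp
  qed
qed

lemma lin_lower:
  fixes l :: "real \<Rightarrow> real"
  assumes dl: "(l has_real_derivative L) (at 0)" and L: "L \<noteq> 0"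
  shows "eventually (\<lambda>s. \<bar>L\<bar> / 2 * \<bar>s\<bar> \<le> \<bar>l s - l 0\<bar>) (nhds 0)"
proof -
  have "((\<lambda>y. (l y - l 0) / (y - 0)) \<longlongrightarrow> L) (at 0)" using dl by (simp add: has_field_derivative_iff)
  then have "eventually (\<lambda>y. dist ((l y - l 0) / (y - 0)) L < \<bar>L\<bar> / 2) (at 0)"
    using L by (intro tendstoD) auto
  then have "eventually (\<lambda>y. y \<noteq> 0 \<longrightarrow> y \<in> UNIV \<longrightarrow> dist ((l y - l 0) / (y - 0)) L < \<bar>L\<bar> / 2) (nhds 0)"
    by (simp add: eventually_at_filter)
  then show ?thesis
  proof (rule eventually_mono)
    fix s assume a: "s \<noteq> 0 \<longrightarrow> s \<in> UNIV \<longrightarrow> dist ((l s - l 0) / (s - 0)) L < \<bar>L\<bar> / 2"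
    show "\<bar>L\<bar> / 2 * \<bar>s\<bar> \<le> \<bar>l s - l 0\<bar>"
    proof (cases "s = 0")
      case False
      then have "\<bar>(l s - l 0) / s - L\<bar> < \<bar>L\<bar> / 2" using a by (simp add: dist_real_def)
      then have "\<bar>L\<bar> / 2 \<le> \<bar>(l s - l 0) / s\<bar>" by linarith
      then have "\<bar>L\<bar> / 2 * \<bar>s\<bar> \<le> \<bar>(l s - l 0) / s\<bar> * \<bar>s\<bar>" by (rule mult_right_mono) simp
      also have "\<dots> = \<bar>l s - l 0\<bar>" using False by (simp add: abs_divide)
      finally show ?thesis .
    qed simp
  qed
qed



lemma powser_Cm:
  fixes E :: "real \<Rightarrow> real"
  assumes "real_analytic_at E x0"
  shows "\<exists>R>0. \<forall>m. Cm m (ball x0 R) E"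
proof -
  obtain r a where r: "r > 0" and s: "\<And>y. \<bar>y - x0\<bar> < r \<Longrightarrow> (\<lambda>m. a m * (y - x0)^m) sums E y"
    using assms unfolding real_analytic_at_def by blast
  have "\<forall>m. Cm m (ball x0 r) E"
  proof
    fix m
    have P: "Cm m (ball 0 r) (\<lambda>z. \<Sum>n. a n * z^n)"
    proof (rule Cm_powser)
      fix z :: real assume "\<bar>z\<bar> < r"
      then show "summable (\<lambda>n. a n * z^n)" using s[of "z + x0"] by (auto simp: sums_iff)
    qed
    have "Cm m (ball x0 r) (\<lambda>y. (\<lambda>z. \<Sum>n. a n * z^n) (y - x0))"
      by (rule Cm_compose[OF open_ball open_ball _ P]) (auto simp: dist_real_def intro: Cm_diff Cm_id Cm_const)
    then show "Cm m (ball x0 r) E"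
      by (rule Cm_local[OF open_ball, rotated]) (use s in \<open>auto simp: dist_real_def sums_iff\<close>)
  qed
  then show ?thesis using r by blast
qed



lemma part2:
  fixes n d k :: nat and p :: config and P :: "nat \<Rightarrow> config" and y0 :: real and q0 :: config
  assumes k: "2 \<le> k" and nP1: "cnorm n d (P 1) = 1" and y0: "y0 \<noteq> 0"
  shows "traj_active 1 (\<lambda>t. cadd p (dp_family k P y0 q0 t))"
proof -
  have "cinner n d (P 1) (P 1) \<noteq> 0" using nP1 by (auto simp: cnorm_def)
  then obtain i c where ic: "P 1 i c * P 1 i c \<noteq> 0"
    unfolding cinner_def by (metis (no_types, lifting) sum.neutral)
  then have Pic: "P 1 i c \<noteq> 0" by auto
  have feq: "(\<lambda>t. cadd p (dp_family k P y0 q0 t) i c) = (\<lambda>t. p i c + ((\<Sum>j\<in>{1..k-1}. y0^j * t^j * P j i c) + t^k * q0 i c))"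
    by (simp add: cadd_def dp_family_def csum_def cscale_def)
  have dj: "((\<lambda>t. y0^j * t^j * P j i c) has_real_derivative (if j = 1 then y0 * P 1 i c else 0)) (at 0)"
    if "j \<in> {1..k-1}" for j
  proof -
    have "((\<lambda>t. y0^j * t^j * P j i c) has_real_derivative y0^j * (of_nat j * 0^(j-1)) * P j i c) (at 0)"
      by (auto intro!: derivative_eq_intros)
    moreover have "y0^j * (of_nat j * 0^(j-1)) * P j i c = (if j = 1 then y0 * P 1 i c else 0)"
      using that by auto
    ultimately show ?thesis by simp
  qed
  have "((\<lambda>t. p i c + ((\<Sum>j\<in>{1..k-1}. y0^j * t^j * P j i c) + t^k * q0 i c)) has_real_derivative
      0 + ((\<Sum>j\<in>{1..k-1}. (if j = 1 then y0 * P 1 i c else 0)) + of_nat k * 0^(k-1) * q0 i c)) (at 0)"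
    by (intro derivative_intros DERIV_sum dj) (auto intro!: derivative_eq_intros)
  moreover have "0 + ((\<Sum>j\<in>{1..k-1}. (if j = 1 then y0 * P 1 i c else 0)) + of_nat k * 0^(k-1) * q0 i c) = y0 * P 1 i c"
  proof -
    have "(1::nat) \<in> {1..k-1}" using k by simp
    moreover have "(0::real)^(k-1) = 0" using k by simp
    ultimately show ?thesis by (simp add: sum.delta)
  qed
  ultimately have "deriv (\<lambda>t. cadd p (dp_family k P y0 q0 t) i c) 0 = y0 * P 1 i c"
    using feq by (simp add: DERIV_imp_deriv)
  then have "\<not> k_vanishing 1 (\<lambda>t. cadd p (dp_family k P y0 q0 t) i c)"
    using y0 Pic by (simp add: k_vanishing_def)
  then show ?thesis by (auto simp: traj_active_def traj_vanishing_def k_vanishing_def)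
qed



lemma stiff_e:
  assumes "stiff_bar d G p Es" "e \<in> G"
  shows "elen d p (fst e) (snd e) \<noteq> 0 \<and> real_analytic_at (Es (fst e) (snd e)) (elen d p (fst e) (snd e)) \<and>
      (\<exists>r>0. \<forall>x. 0 < \<bar>x - elen d p (fst e) (snd e)\<bar> \<and> \<bar>x - elen d p (fst e) (snd e)\<bar> < r \<longrightarrow>
                  Es (fst e) (snd e) (elen d p (fst e) (snd e)) < Es (fst e) (snd e) x) \<and>
      (deriv ^^ 2) (Es (fst e) (snd e)) (elen d p (fst e) (snd e)) > 0"
proof -
  have "(\<lambda>(i,j).
      elen d p i j \<noteq> 0 \<and> real_analytic_at (Es i j) (elen d p i j) \<and>
      (\<exists>r>0. \<forall>x. 0 < \<bar>x - elen d p i j\<bar> \<and> \<bar>x - elen d p i j\<bar> < r \<longrightarrow>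
                  Es i j (elen d p i j) < Es i j x) \<and>
      (deriv ^^ 2) (Es i j) (elen d p i j) > 0) e"
    using assms(1)[unfolded stiff_bar_def] assms(2) by (rule bspec)
  then show ?thesis unfolding case_prod_beta .
qed

lemma isCont_nhds: assumes "isCont f x" "f x = y" shows "(f \<longlongrightarrow> y) (nhds x)"
proof -
  have "f \<midarrow>x\<rightarrow> f x" using assms(1) by (simp add: isCont_def)
  then have "(f \<longlongrightarrow> f x) (nhds x)" by (simp only: tendsto_at_iff_tendsto_nhds)
  then show ?thesis using assms(2) by simp
qed

lemma part1:
  fixes n d l k :: nat and G :: "(nat \<times> nat) set" and p :: config
    and Es :: "nat \<Rightarrow> nat \<Rightarrow> real \<Rightarrow> real" and Kb :: "config set"
    and P :: "nat \<Rightarrow> config" and q0 :: config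
  assumes gr: "graph_ok n G"
    and compl: "is_complement n d l (Kspace n d l G p) Kb"
    and stiff: "stiff_bar d G p Es"
    and k: "2 \<le> k"
    and q0Kb: "q0 \<in> Kb" and sph: "0^2 + (cnorm n d q0)^2 = (1::real)"
    and van: "\<forall>m\<le>2*k. taylor_coeff (\<lambda>t. fdelta d G Es p (dp_family k P 0 q0 t)) m = 0"
  shows False
proof -
  have finG: "finite G"
  proof (rule finite_subset)
    show "G \<subseteq> {..<n} \<times> {..<n}" using gr by (auto simp: graph_ok_def)
  qed auto
  have q0nz: "q0 \<noteq> czero" using sph by (auto simp: cnorm_def cinner_def czero_def)
  have q0pin: "q0 \<in> pinned_space n d l" using compl q0Kb by (auto simp: is_complement_def)
  have "q0 \<notin> Kspace n d l G p" using compl q0Kb q0nz by (auto simp: is_complement_def)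
  then obtain e0 where e0: "e0 \<in> G" and
    b0: "(\<Sum>c<d. (p (fst e0) c - p (snd e0) c) * (q0 (fst e0) c - q0 (snd e0) c)) \<noteq> 0"
    using q0pin by (auto simp: Kspace_def)
  define \<alpha> where "\<alpha> e = (\<Sum>c<d. (p (fst e) c - p (snd e) c)^2)" for e
  define \<beta> where "\<beta> e = (\<Sum>c<d. (p (fst e) c - p (snd e) c) * (q0 (fst e) c - q0 (snd e) c))" for e
  define \<gamma> where "\<gamma> e = (\<Sum>c<d. (q0 (fst e) c - q0 (snd e) c)^2)" for e
  define S where "S e s = \<alpha> e + 2 * \<beta> e * s + \<gamma> e * s^2" for e and s :: real
  define E where "E e = Es (fst e) (snd e)" for e
  define de where "de e = elen d p (fst e) (snd e)" for e
  define g where "g t = (\<Sum>e\<in>G. E e (sqrt (S e (t^k)))) - (\<Sum>e\<in>G. E e (de e))" for t :: real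
  define F where "F s = (\<Sum>e\<in>G. E e (sqrt (S e s)) - E e (de e))" for s :: real
  have b0': "\<beta> e0 \<noteq> 0" using b0 by (simp add: \<beta>_def)
  have de_eq: "de e = sqrt (\<alpha> e)" for e by (simp add: de_def elen_def \<alpha>_def)
  have de_pos: "de e > 0" and al_pos: "\<alpha> e > 0" if "e \<in> G" for e
  proof -
    have "de e \<noteq> 0" using stiff that by (auto simp: stiff_bar_def de_def split: prod.splits)
    moreover have "\<alpha> e \<ge> 0" by (simp add: \<alpha>_def sum_nonneg)
    ultimately show "de e > 0" "\<alpha> e > 0" using de_eq by auto
  qed
  have S0: "S e 0 = \<alpha> e" for e by (simp add: S_def)
  have geq: "fdelta d G Es p (dp_family k P 0 q0 t) = g t" for t
  proof -
    have cfg: "cadd p (dp_family k P 0 q0 t) i c = p i c + t^k * q0 i c" for i c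
    proof -
      have z: "(\<Sum>j\<in>{1..k-1}. 0^j * t^j * P j i c) = (0::real)" by (rule sum.neutral) auto
      then show ?thesis by (simp add: cadd_def dp_family_def csum_def cscale_def)
    qed
    have el: "elen d (cadd p (dp_family k P 0 q0 t)) i j = sqrt (S (i,j) (t^k))" for i j
    proof -
      have "(\<Sum>c<d. (cadd p (dp_family k P 0 q0 t) i c - cadd p (dp_family k P 0 q0 t) j c)^2)
          = (\<Sum>c<d. (p i c - p j c)^2 + (2 * t^k) * ((p i c - p j c) * (q0 i c - q0 j c)) + (t^k)^2 * (q0 i c - q0 j c)^2)"
        by (rule sum.cong) (auto simp: cfg power2_eq_square algebra_simps)
      also have "\<dots> = (\<Sum>c<d. (p i c - p j c)^2) + (2 * t^k) * (\<Sum>c<d. (p i c - p j c) * (q0 i c - q0 j c)) + (t^k)^2 * (\<Sum>c<d. (q0 i c - q0 j c)^2)"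
        by (simp add: sum.distrib sum_distrib_left)
      also have "\<dots> = S (i,j) (t^k)"
        by (simp add: S_def \<alpha>_def \<beta>_def \<gamma>_def algebra_simps)
      finally show ?thesis by (simp add: elen_def)
    qed
    show ?thesis
      by (simp add: fdelta_def energy_def g_def el E_def de_def case_prod_beta' split_def)
  qed
  have gfun: "(\<lambda>t. fdelta d G Es p (dp_family k P 0 q0 t)) = g" using geq by auto
  have vang: "\<forall>m\<le>2*k. (deriv^^m) g 0 = 0" using van by (simp add: gfun taylor_coeff_def)
  have gF: "g t = F (t^k)" for t by (simp add: g_def F_def sum_subtractf)
  have "\<forall>e\<in>G. \<exists>R>0. \<forall>m. Cm m (ball (de e) R) (E e)"
  proof
    fix e assume "e \<in> G"
    then have "real_analytic_at (E e) (de e)" using stiff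
      by (auto simp: stiff_bar_def E_def de_def split: prod.splits)
    then show "\<exists>R>0. \<forall>m. Cm m (ball (de e) R) (E e)" by (rule powser_Cm)
  qed
  then obtain R where R: "\<And>e. e \<in> G \<Longrightarrow> R e > 0" "\<And>e m. e \<in> G \<Longrightarrow> Cm m (ball (de e) (R e)) (E e)"
    by metis
  have contS: "isCont (\<lambda>t. S e (t^k)) 0" for e by (simp add: S_def)
  have contl: "isCont (\<lambda>t. sqrt (S e (t^k))) 0" for e unfolding S_def by (intro continuous_intros)
  have "\<forall>e\<in>G. eventually (\<lambda>t. S e (t^k) > 0 \<and> sqrt (S e (t^k)) \<in> ball (de e) (R e)) (nhds 0)"
  proof
    fix e assume e: "e \<in> G"
    have z: "(0::real)^k = 0" using k by simp
    have "((\<lambda>t. S e (t^k)) \<longlongrightarrow> \<alpha> e) (nhds 0)"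
      by (rule isCont_nhds[OF contS]) (simp add: S_def z)
    then have 1: "eventually (\<lambda>t. S e (t^k) > 0) (nhds 0)" using al_pos[OF e] by (intro order_tendstoD) auto
    have "((\<lambda>t. sqrt (S e (t^k))) \<longlongrightarrow> de e) (nhds 0)"
      by (rule isCont_nhds[OF contl]) (simp add: S_def z de_eq)
    then have 2: "eventually (\<lambda>t. dist (sqrt (S e (t^k))) (de e) < R e) (nhds 0)" using R(1)[OF e] by (intro tendstoD) auto
    show "eventually (\<lambda>t. S e (t^k) > 0 \<and> sqrt (S e (t^k)) \<in> ball (de e) (R e)) (nhds 0)"
      using eventually_conj[OF 1 2] by (simp add: dist_commute)
  qed
  then have "eventually (\<lambda>t. \<forall>e\<in>G. S e (t^k) > 0 \<and> sqrt (S e (t^k)) \<in> ball (de e) (R e)) (nhds 0)"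
    by (rule eventually_ball_finite[OF finG])
  then obtain U where U: "open U" "0 \<in> U" "\<And>t e. t \<in> U \<Longrightarrow> e \<in> G \<Longrightarrow> S e (t^k) > 0 \<and> sqrt (S e (t^k)) \<in> ball (de e) (R e)"
    unfolding eventually_nhds by blast
  have cmg: "Cm m U g" for m
  proof -
    have "Cm m U (\<lambda>t. E e (sqrt (S e (t^k))))" if e: "e \<in> G" for e
    proof -
      have c1: "Cm m U (\<lambda>t. S e (t^k))" unfolding S_def
        by (intro Cm_add Cm_mult Cm_const Cm_power Cm_id U)
      have c2: "Cm m U (\<lambda>t. sqrt (S e (t^k)))"
        by (rule Cm_compose[OF U(1) open_greaterThan _ Cm_sqrt c1]) (use U(3)[OF _ e] in auto)
      show ?thesis
        by (rule Cm_compose[OF U(1) open_ball _ R(2)[OF e] c2]) (use U(3)[OF _ e] in auto)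
    qed
    then show ?thesis unfolding g_def
      by (intro Cm_diff Cm_sum Cm_const U finG)
  qed
  have nonneg: "eventually (\<lambda>s. 0 \<le> E e (sqrt (S e s)) - E e (de e)) (nhds 0)" if e: "e \<in> G" for e
  proof -
    obtain r where r: "r > 0" "\<And>x. 0 < \<bar>x - de e\<bar> \<and> \<bar>x - de e\<bar> < r \<Longrightarrow> E e (de e) < E e x"
      using stiff_e[OF stiff e] unfolding E_def de_def by blast
    have "isCont (\<lambda>s. sqrt (S e s)) 0" unfolding S_def by (intro continuous_intros)
    then have "((\<lambda>s. sqrt (S e s)) \<longlongrightarrow> de e) (nhds 0)"
      by (rule isCont_nhds) (simp add: S0 de_eq)
    then have "eventually (\<lambda>s. dist (sqrt (S e s)) (de e) < r) (nhds 0)" using r by (intro tendstoD) auto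
    then show ?thesis
    proof (rule eventually_mono)
      fix s assume "dist (sqrt (S e s)) (de e) < r"
      then show "0 \<le> E e (sqrt (S e s)) - E e (de e)"
        using r(2)[of "sqrt (S e s)"] by (cases "sqrt (S e s) = de e") (auto simp: dist_real_def)
    qed
  qed
  define L where "L = \<beta> e0 / sqrt (\<alpha> e0)"
  have L0: "L \<noteq> 0" using b0' al_pos[OF e0] by (simp add: L_def)
  have dl: "((\<lambda>s. sqrt (S e0 s)) has_real_derivative L) (at 0)"
  proof -
    have "((\<lambda>s. sqrt (S e0 s)) has_real_derivative inverse (sqrt (S e0 0)) / 2 * (2 * \<beta> e0)) (at 0)"
    proof (rule DERIV_chain2[where f = sqrt])
      show "DERIV sqrt (S e0 0) :> inverse (sqrt (S e0 0)) / 2" using al_pos[OF e0] S0 by (intro DERIV_real_sqrt) simp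
      show "((\<lambda>s. S e0 s) has_real_derivative 2 * \<beta> e0) (at 0)"
        unfolding S_def by (auto intro!: derivative_eq_intros)
    qed
    then show ?thesis by (simp add: L_def S0 divide_simps)
  qed
  have lin: "eventually (\<lambda>s. \<bar>L\<bar> / 2 * \<bar>s\<bar> \<le> \<bar>sqrt (S e0 s) - de e0\<bar>) (nhds 0)"
    using lin_lower[OF dl L0] by (simp add: S0 de_eq)
  obtain r0 where r0: "r0 > 0" "\<And>x. 0 < \<bar>x - de e0\<bar> \<and> \<bar>x - de e0\<bar> < r0 \<Longrightarrow> E e0 (de e0) < E e0 x"
    using stiff_e[OF stiff e0] unfolding E_def de_def by blast
  have d1: "deriv (E e0) (de e0) = 0"
  proof (rule DERIV_local_min)
    have "Cm 1 (ball (de e0) (R e0)) (E e0)" using R(2)[OF e0] .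
    then show "DERIV (E e0) (de e0) :> deriv (E e0) (de e0)" using R(1)[OF e0] by (auto simp: Cm_def)
    show "\<forall>y. \<bar>de e0 - y\<bar> < r0 \<longrightarrow> E e0 (de e0) \<le> E e0 y"
    proof (intro allI impI)
      fix y assume "\<bar>de e0 - y\<bar> < r0" then show "E e0 (de e0) \<le> E e0 y"
        using r0(2)[of y] by (cases "y = de e0") (auto simp: abs_minus_commute)
    qed
  qed (rule r0(1))
  have d2: "(deriv^^2) (E e0) (de e0) > 0" using stiff_e[OF stiff e0] unfolding E_def de_def by blast
  define c1 where "c1 = (deriv^^2) (E e0) (de e0) / 4"
  have c1: "c1 > 0" using d2 by (simp add: c1_def)
  have quad: "eventually (\<lambda>x. c1 * (x - de e0)^2 \<le> E e0 x - E e0 (de e0)) (nhds (de e0))"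
    unfolding c1_def by (rule quad_lower[OF open_ball _ R(2)[OF e0] d1 d2]) (use R(1)[OF e0] in simp)
  have "isCont (\<lambda>s. sqrt (S e0 s)) 0" unfolding S_def by (intro continuous_intros)
  then have lim0: "filterlim (\<lambda>s. sqrt (S e0 s)) (nhds (de e0)) (nhds 0)"
    by (rule isCont_nhds) (simp add: S0 de_eq)
  have quad': "eventually (\<lambda>s. c1 * (sqrt (S e0 s) - de e0)^2 \<le> E e0 (sqrt (S e0 s)) - E e0 (de e0)) (nhds 0)"
    using lim0 quad by (auto simp: filterlim_iff)
  define c where "c = c1 * (\<bar>L\<bar> / 2)^2"
  have cpos: "c > 0" using c1 L0 by (simp add: c_def)
  have Fb: "eventually (\<lambda>s. c * s^2 \<le> F s) (nhds 0)"
  proof -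
    have all: "eventually (\<lambda>s. \<forall>e\<in>G. 0 \<le> E e (sqrt (S e s)) - E e (de e)) (nhds 0)"
      by (rule eventually_ball_finite[OF finG]) (use nonneg in blast)
    show ?thesis using eventually_conj[OF all eventually_conj[OF lin quad']]
    proof (rule eventually_mono)
      fix s assume a: "(\<forall>e\<in>G. 0 \<le> E e (sqrt (S e s)) - E e (de e)) \<and>
        \<bar>L\<bar> / 2 * \<bar>s\<bar> \<le> \<bar>sqrt (S e0 s) - de e0\<bar> \<and>
        c1 * (sqrt (S e0 s) - de e0)^2 \<le> E e0 (sqrt (S e0 s)) - E e0 (de e0)"
      have "(\<bar>L\<bar> / 2 * \<bar>s\<bar>)^2 \<le> \<bar>sqrt (S e0 s) - de e0\<bar>^2"
        using a by (intro power_mono) auto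
      then have "c1 * (\<bar>L\<bar> / 2 * \<bar>s\<bar>)^2 \<le> c1 * (sqrt (S e0 s) - de e0)^2"
        using c1 by (intro mult_left_mono) auto
      moreover have "c * s^2 = c1 * (\<bar>L\<bar> / 2 * \<bar>s\<bar>)^2" by (simp add: c_def power_mult_distrib power_divide power2_abs)
      moreover have "E e0 (sqrt (S e0 s)) - E e0 (de e0) \<le> F s"
        unfolding F_def using a e0 finG by (intro member_le_sum) auto
      ultimately show "c * s^2 \<le> F s" using a by linarith
    qed
  qed
  have "filterlim (\<lambda>h::real. h^k) (nhds 0) (at_right 0)"
  proof -
    have "((\<lambda>h::real. h^k) \<longlongrightarrow> 0^k) (at_right 0)" by (intro tendsto_intros)
    then show ?thesis using k by simp
  qed
  then have "eventually (\<lambda>h. c * (h^k)^2 \<le> F (h^k)) (at_right 0)"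
    using Fb by (auto simp: filterlim_iff)
  then have evg: "eventually (\<lambda>h. c * h^(2*k) \<le> g h) (at_right 0)"
    by (simp add: gF power_mult[symmetric] mult.commute)
  show False
    by (rule taylor_contra[OF U(1,2) cmg _ vang cpos evg]) (use k in simp)
qed

theorem lemma7p6:
  fixes n d l k :: nat and G :: "(nat \<times> nat) set" and p :: config
    and Es :: "nat \<Rightarrow> nat \<Rightarrow> real \<Rightarrow> real" and Kb :: "config set"
    and P :: "nat \<Rightarrow> config" and y0 :: real and q0 :: config
  assumes "graph_ok n G"
    and "is_pinned n d l p"
    and "dim_one (Kspace n d l G p)"
    and "is_complement n d l (Kspace n d l G p) Kb"
    and "stiff_bar d G p Es"
    and "2 \<le> k"
    and "is_flex n d l G p 1 (k - 1)
           (\<lambda>t. cadd p (csum (\<lambda>j. cscale (t^j) (P j)) {1..k-1}))"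
    and "cnorm n d (P 1) = 1"
    and "\<forall>j\<in>{2..k-1}. P j \<in> Kb"
    and "\<not> (\<forall>y q. q \<in> Kb \<and> y^2 + (cnorm n d q)^2 = 1 \<longrightarrow>
              taylor_coeff (\<lambda>t. fdelta d G Es p (dp_family k P y q t)) (2*k) > 0)"
    and "\<not> (\<forall>y q. q \<in> Kb \<and> y^2 + (cnorm n d q)^2 = 1 \<longrightarrow>
              taylor_coeff (\<lambda>t. fdelta d G Es p (dp_family k P y q t)) (2*k) < 0)"
    and "\<not> (\<exists>y1 q1 y2 q2. q1 \<in> Kb \<and> y1^2 + (cnorm n d q1)^2 = 1 \<and>
              q2 \<in> Kb \<and> y2^2 + (cnorm n d q2)^2 = 1 \<and>
              taylor_coeff (\<lambda>t. fdelta d G Es p (dp_family k P y1 q1 t)) (2*k) > 0 \<and>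
              taylor_coeff (\<lambda>t. fdelta d G Es p (dp_family k P y2 q2 t)) (2*k) < 0)"
    and "q0 \<in> Kb" and "y0^2 + (cnorm n d q0)^2 = 1"
    and "\<forall>m\<le>2*k. taylor_coeff (\<lambda>t. fdelta d G Es p (dp_family k P y0 q0 t)) m = 0"
  shows "y0 \<noteq> 0 \<and> traj_active 1 (\<lambda>t. cadd p (dp_family k P y0 q0 t))"
proof -
  have y0: "y0 \<noteq> 0"
  proof
    assume y: "y0 = 0"
    show False
      by (rule part1[OF assms(1) assms(4) assms(5) assms(6) assms(13)]) (use assms(14,15) y in auto)
  qed
  have "traj_active 1 (\<lambda>t. cadd p (dp_family k P y0 q0 t))"
    by (rule part2) (use assms(6,8) y0 in auto)
  then show ?thesis using y0 by blast
qed

end
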